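(* Let $\mathbb R^n$ and $\mathbb R_+=[0,\infty)$ carry the bounded coarse structures of their Euclidean metrics and let $\mathbb R^n\times\mathbb R_+$ carry the product coarse structure. Then the inclusion $i\colon\mathbb R_+\to\mathbb R^n\times\mathbb R_+$, $i(s)=(0,s)$, is a coarse homotopy-equivalence.
   Context: The bounded coarse structure on a metric space has as entourages the subsets of the sets $D_R=\{(x,y):d(x,y)<R\}$. The product coarse structure on $X\times Y$ has as entourages the subsets of finite unions of finite compositions of sets $M\times N$ with $M$, $N$ entourages of $X$, $Y$ (composition $M_1M_2=\{(x,z):\exists y,(x,y)\in M_1,(y,z)\in M_2\}$). In a coarse space, $M(x)=\{y:(y,x)\in M\}$ and a bounded set is one contained in some $M(x)$; a coarse map carries entourages into entourages and has bounded preimages of bounded sets. A generalised ray is $[0,\infty)$ with a unital coarse structure (diagonal contained in an entourage) such that entourages are open and bounded sets have compact closure. A coarse homotopy is a map $F\colon X\times R\to Y$ with $R$ a generalised ray such that $(x,t)\mapsto(F(x,t),t)$ is a coarse map $X\times R\to Y\times R$; for every bounded $B\subseteq X$ there is $T\in R$ such that for $x\in B$, $t\mapsto F(x,t)$ is constant for $t\ge T$; and $x\mapsto\lim_{t\to\infty}F(x,t)$ is coarse. Two coarse maps are coarsely homotopic if joined by a finite chain of pairs $F(-,0),F(-,\infty)$; a coarse map $f\colon X\to Y$ is a coarse homotopy-equivalence if there is a coarse $g\colon Y\to X$ with $g\circ f$ and $f\circ g$ coarsely homotopic to the identities. *)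

theory Defs
  imports "HOL-Analysis.Analysis"
begin

text \<open>A coarse space is represented by a carrier set X together with its set E of
entourages (subsets of X \<times> X).\<close>

definition bounded_coarse :: "'a::metric_space set \<Rightarrow> ('a \<times> 'a) set set" where
  "bounded_coarse S = {M. M \<subseteq> S \<times> S \<and> (\<exists>R. \<forall>(x, y)\<in>M. dist x y < R)}"

definition prod_ent :: "('a \<times> 'a) set \<Rightarrow> ('b \<times> 'b) set \<Rightarrow> (('a \<times> 'b) \<times> ('a \<times> 'b)) set" where
  "prod_ent M N = {((x, y), (x', y')). (x, x') \<in> M \<and> (y, y') \<in> N}"

inductive_set prod_comps :: "('a \<times> 'a) set set \<Rightarrow> ('b \<times> 'b) set set
    \<Rightarrow> (('a \<times> 'b) \<times> ('a \<times> 'b)) set set"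
  for EA :: "('a \<times> 'a) set set" and EB :: "('b \<times> 'b) set set" where
  basic: "M \<in> EA \<Longrightarrow> N \<in> EB \<Longrightarrow> prod_ent M N \<in> prod_comps EA EB"
| comp: "P \<in> prod_comps EA EB \<Longrightarrow> Q \<in> prod_comps EA EB \<Longrightarrow> P O Q \<in> prod_comps EA EB"

definition prod_coarse :: "('a \<times> 'a) set set \<Rightarrow> ('b \<times> 'b) set set
    \<Rightarrow> (('a \<times> 'b) \<times> ('a \<times> 'b)) set set" where
  "prod_coarse EA EB = {E. \<exists>F. finite F \<and> F \<subseteq> prod_comps EA EB \<and> E \<subseteq> \<Union>F}"

definition cbounded :: "('a \<times> 'a) set set \<Rightarrow> 'a set \<Rightarrow> bool" where
  "cbounded E B \<longleftrightarrow> (\<exists>M\<in>E. \<exists>x. B \<subseteq> {y. (y, x) \<in> M})"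

definition coarse_map :: "'a set \<Rightarrow> ('a \<times> 'a) set set \<Rightarrow> 'b set \<Rightarrow> ('b \<times> 'b) set set
    \<Rightarrow> ('a \<Rightarrow> 'b) \<Rightarrow> bool" where
  "coarse_map X EA Y EB f \<longleftrightarrow>
     f ` X \<subseteq> Y \<and>
     (\<forall>M\<in>EA. (\<lambda>(x, x'). (f x, f x')) ` M \<in> EB) \<and>
     (\<forall>B. cbounded EB B \<longrightarrow> cbounded EA (f -` B \<inter> X))"

definition coarse_structure :: "'a set \<Rightarrow> ('a \<times> 'a) set set \<Rightarrow> bool" where
  "coarse_structure X E \<longleftrightarrow>
     E \<subseteq> Pow (X \<times> X) \<and> {} \<in> E \<and>
     (\<forall>M\<in>E. \<forall>N. N \<subseteq> M \<longrightarrow> N \<in> E) \<and>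
     (\<forall>M\<in>E. \<forall>N\<in>E. M \<union> N \<in> E) \<and>
     (\<forall>M\<in>E. M\<inverse> \<in> E) \<and>
     (\<forall>M\<in>E. \<forall>N\<in>E. M O N \<in> E)"

text \<open>A generalised ray: a coarse structure ER on [0,\<infinity>) which is unital, whose
entourages are open (every entourage lies in an open entourage, topology of
[0,\<infinity>)\<times>[0,\<infinity>)), and whose bounded sets have compact closure.\<close>
definition gen_ray :: "(real \<times> real) set set \<Rightarrow> bool" where
  "gen_ray ER \<longleftrightarrow>
     coarse_structure {0..} ER \<and>
     (\<exists>M\<in>ER. Id_on {0..} \<subseteq> M) \<and>
     (\<forall>M\<in>ER. \<exists>U\<in>ER. M \<subseteq> U \<and> openin (top_of_set ({0..} \<times> {0..})) U) \<and>
     (\<forall>B. cbounded ER B \<longrightarrow> compact (closure B))"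

text \<open>x \<mapsto> lim_{t\<rightarrow>\<infinity>} F(x,t) (the eventual value).\<close>
definition htpy_limit :: "('a \<times> real \<Rightarrow> 'b) \<Rightarrow> 'a \<Rightarrow> 'b" where
  "htpy_limit F x = (THE l. \<exists>T\<ge>0. \<forall>t\<ge>T. F (x, t) = l)"

definition coarse_homotopy :: "'a set \<Rightarrow> ('a \<times> 'a) set set \<Rightarrow> 'b set \<Rightarrow> ('b \<times> 'b) set set
    \<Rightarrow> (real \<times> real) set set \<Rightarrow> ('a \<times> real \<Rightarrow> 'b) \<Rightarrow> bool" where
  "coarse_homotopy X EA Y EB ER F \<longleftrightarrow>
     gen_ray ER \<and>
     coarse_map (X \<times> {0..}) (prod_coarse EA ER) (Y \<times> {0..}) (prod_coarse EB ER)
        (\<lambda>(x, t). (F (x, t), t)) \<and>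
     (\<forall>B. B \<subseteq> X \<and> cbounded EA B \<longrightarrow>
        (\<exists>T\<ge>0. \<forall>x\<in>B. \<forall>t\<ge>T. \<forall>t'\<ge>T. F (x, t) = F (x, t'))) \<and>
     coarse_map X EA Y EB (htpy_limit F)"

definition htpy_step :: "'a set \<Rightarrow> ('a \<times> 'a) set set \<Rightarrow> 'b set \<Rightarrow> ('b \<times> 'b) set set
    \<Rightarrow> ('a \<Rightarrow> 'b) \<Rightarrow> ('a \<Rightarrow> 'b) \<Rightarrow> bool" where
  "htpy_step X EA Y EB f g \<longleftrightarrow>
     (\<exists>ER F. coarse_homotopy X EA Y EB ER F \<and>
        (\<forall>x\<in>X. f x = F (x, 0)) \<and> (\<forall>x\<in>X. g x = htpy_limit F x))"

definition coarsely_homotopic :: "'a set \<Rightarrow> ('a \<times> 'a) set set \<Rightarrow> 'b set \<Rightarrow> ('b \<times> 'b) set set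
    \<Rightarrow> ('a \<Rightarrow> 'b) \<Rightarrow> ('a \<Rightarrow> 'b) \<Rightarrow> bool" where
  "coarsely_homotopic X EA Y EB f g \<longleftrightarrow>
     coarse_map X EA Y EB f \<and> coarse_map X EA Y EB g \<and>
     (\<lambda>u v. htpy_step X EA Y EB u v \<or> htpy_step X EA Y EB v u)\<^sup>*\<^sup>* f g"

definition coarse_htpy_equiv :: "'a set \<Rightarrow> ('a \<times> 'a) set set \<Rightarrow> 'b set \<Rightarrow> ('b \<times> 'b) set set
    \<Rightarrow> ('a \<Rightarrow> 'b) \<Rightarrow> bool" where
  "coarse_htpy_equiv X EA Y EB f \<longleftrightarrow>
     coarse_map X EA Y EB f \<and>
     (\<exists>g. coarse_map Y EB X EA g \<and>
        coarsely_homotopic X EA X EA (g \<circ> f) id \<and>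
        coarsely_homotopic Y EB Y EB (f \<circ> g) id)"

end

theory Submission
  imports Defs
begin

lemma dist_Pair_le: "dist (a, b) (c, d) \<le> dist a c + dist b d"
  unfolding dist_Pair_Pair by (metis sqrt_sum_squares_le_sum zero_le_dist)

lemma finite_bound:
  assumes "finite F" "\<forall>P\<in>F. \<exists>R::real. \<forall>(x,y)\<in>P. dist x y < R"
  shows "\<exists>R. \<forall>(x,y)\<in>\<Union>F. dist x y < R"
  using assms
proof (induction F rule: finite_induct)
  case empty then show ?case by auto
next
  case (insert P F)
  then obtain R1 where R1: "\<forall>(x,y)\<in>\<Union>F. dist x y < R1" by auto
  from insert obtain R2 where R2: "\<forall>(x,y)\<in>P. dist x y < R2" by auto
  show ?case
    apply (rule exI[of _ "max R1 R2"])
    using R1 R2 by fastforce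
qed

lemma prod_comps_bounded:
  assumes "P \<in> prod_comps (bounded_coarse SA) (bounded_coarse SB)"
  shows "P \<subseteq> (SA \<times> SB) \<times> (SA \<times> SB) \<and>
     (\<exists>R. \<forall>((a,b),(a',b'))\<in>P. dist a a' < R \<and> dist b b' < R)"
  using assms
proof (induction rule: prod_comps.induct)
  case (basic M N)
  then obtain R1 R2 where "M \<subseteq> SA \<times> SA" "\<forall>(x, y)\<in>M. dist x y < R1"
     "N \<subseteq> SB \<times> SB" "\<forall>(x, y)\<in>N. dist x y < R2"
    unfolding bounded_coarse_def by auto
  then show ?case
    unfolding prod_ent_def
    apply (intro conjI exI[of _ "max R1 R2"])
    by fastforce+
next
  case (comp P Q)
  then obtain R1 R2 where A: "P \<subseteq> (SA \<times> SB) \<times> (SA \<times> SB)" "\<forall>((a,b),(a',b'))\<in>P. dist a a' < R1 \<and> dist b b' < R1"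
     "Q \<subseteq> (SA \<times> SB) \<times> (SA \<times> SB)" "\<forall>((a,b),(a',b'))\<in>Q. dist a a' < R2 \<and> dist b b' < R2"
    by blast
  show ?case
  proof (intro conjI exI[of _ "R1 + R2"])
    show "P O Q \<subseteq> (SA \<times> SB) \<times> SA \<times> SB" using A by auto
    show "\<forall>((a, b), a', b')\<in>P O Q. dist a a' < R1 + R2 \<and> dist b b' < R1 + R2"
    proof (clarify)
      fix a b a' b' c d
      assume "((a, b), c, d) \<in> P" "((c, d), a', b') \<in> Q"
      then have "dist a c < R1" "dist b d < R1" "dist c a' < R2" "dist d b' < R2"
        using A by fastforce+
      then show "dist a a' < R1 + R2 \<and> dist b b' < R1 + R2"
        by (smt (verit) dist_triangle)
    qed
  qed
qed

lemma prod_coarse_eq: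
  "prod_coarse (bounded_coarse SA) (bounded_coarse SB) = bounded_coarse (SA \<times> SB)"
proof
  show "prod_coarse (bounded_coarse SA) (bounded_coarse SB) \<subseteq> bounded_coarse (SA \<times> SB)"
  proof
    fix E assume "E \<in> prod_coarse (bounded_coarse SA) (bounded_coarse SB)"
    then obtain F where F: "finite F" "F \<subseteq> prod_comps (bounded_coarse SA) (bounded_coarse SB)" "E \<subseteq> \<Union>F"
      unfolding prod_coarse_def by auto
    have "\<forall>P\<in>F. \<exists>R::real. \<forall>(x,y)\<in>P. dist x y < R"
    proof
      fix P assume "P \<in> F"
      then obtain R where R: "\<forall>((a,b),(a',b'))\<in>P. dist a a' < R \<and> dist b b' < R"
        using prod_comps_bounded F by blast
      show "\<exists>R::real. \<forall>(x,y)\<in>P. dist x y < R"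
      proof (intro exI[of _ "R + R"], clarify)
        fix a b a' b' assume "((a,b),(a',b')) \<in> P"
        then have "dist a a' < R" "dist b b' < R" using R by fastforce+
        then show "dist (a,b) (a',b') < R + R" using dist_Pair_le[of a b a' b'] by linarith
      qed
    qed
    then obtain R where "\<forall>(x,y)\<in>\<Union>F. dist x y < R" using finite_bound F by blast
    moreover have "\<Union>F \<subseteq> (SA \<times> SB) \<times> (SA \<times> SB)"
    proof
      fix e assume "e \<in> \<Union>F"
      then obtain P where "P \<in> F" "e \<in> P" by auto
      then show "e \<in> (SA \<times> SB) \<times> (SA \<times> SB)" using prod_comps_bounded[of P SA SB] F(2) by auto
    qed
    ultimately have "E \<subseteq> (SA \<times> SB) \<times> (SA \<times> SB)" "\<forall>(x,y)\<in>E. dist x y < R" using F(3) by (auto simp del: Union_iff) blast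
    then show "E \<in> bounded_coarse (SA \<times> SB)"
      unfolding bounded_coarse_def by blast
  qed
next
  show "bounded_coarse (SA \<times> SB) \<subseteq> prod_coarse (bounded_coarse SA) (bounded_coarse SB)"
  proof
    fix E assume "E \<in> bounded_coarse (SA \<times> SB)"
    then obtain R where E: "E \<subseteq> (SA \<times> SB) \<times> (SA \<times> SB)" "\<forall>(x,y)\<in>E. dist x y < R"
      unfolding bounded_coarse_def by auto
    define M where "M = (\<lambda>(p,q). (fst p, fst q)) ` E"
    define N where "N = (\<lambda>(p,q). (snd p, snd q)) ` E"
    have "dist (fst p) (fst q) < R" "dist (snd p) (snd q) < R" if "(p,q) \<in> E" for p q
      using E(2) that dist_fst_le[of p q] dist_snd_le[of p q] by fastforce+
    then have M: "M \<in> bounded_coarse SA" and N: "N \<in> bounded_coarse SB"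
      unfolding bounded_coarse_def M_def N_def using E(1)
      by (auto intro!: exI[of _ R])
    have "E \<subseteq> prod_ent M N"
    proof
      fix e assume "e \<in> E"
      then obtain a b a' b' where e: "e = ((a,b),(a',b'))" "((a,b),(a',b')) \<in> E" by (metis prod.collapse)
      then have "(a,a') \<in> M" "(b,b') \<in> N" unfolding M_def N_def by force+
      then show "e \<in> prod_ent M N" unfolding prod_ent_def e by simp
    qed
    moreover have "prod_ent M N \<in> prod_comps (bounded_coarse SA) (bounded_coarse SB)"
      using M N by (rule prod_comps.basic)
    ultimately show "E \<in> prod_coarse (bounded_coarse SA) (bounded_coarse SB)"
      unfolding prod_coarse_def by (intro CollectI exI[of _ "{prod_ent M N}"]) auto
  qed
qed

lemma cbounded_bc:
  "cbounded (bounded_coarse S) B \<longleftrightarrow> B \<subseteq> S \<and> bounded B"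
proof
  assume "cbounded (bounded_coarse S) B"
  then obtain M x R where M: "M \<subseteq> S \<times> S" "\<forall>(x, y)\<in>M. dist x y < R" "B \<subseteq> {y. (y, x) \<in> M}"
    unfolding cbounded_def bounded_coarse_def by auto
  have "B \<subseteq> S" using M by auto
  moreover have "B \<subseteq> ball x R" using M by (fastforce simp: dist_commute)
  ultimately show "B \<subseteq> S \<and> bounded B" using bounded_subset bounded_ball by blast
next
  assume A: "B \<subseteq> S \<and> bounded B"
  show "cbounded (bounded_coarse S) B"
  proof (cases "B = {}")
    case True
    then show ?thesis unfolding cbounded_def bounded_coarse_def by (intro bexI[of _ "{}"]) auto
  next
    case False
    then obtain x where x: "x \<in> B" by auto
    from A obtain e where e: "\<forall>y\<in>B. dist x y \<le> e"
      using bounded_any_center by blast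
    show ?thesis unfolding cbounded_def bounded_coarse_def
      apply (intro bexI[of _ "B \<times> {x}"] exI[of _ x])
      using A x e by (force simp: dist_commute intro!: exI[of _ "e+1"])+
  qed
qed

lemma coarse_map_bcI:
  assumes "f ` S \<subseteq> T"
    and "\<And>R. \<exists>R'. \<forall>x\<in>S. \<forall>y\<in>S. dist x y < R \<longrightarrow> dist (f x) (f y) \<le> R'"
    and "\<And>B. B \<subseteq> T \<Longrightarrow> bounded B \<Longrightarrow> bounded (f -` B \<inter> S)"
  shows "coarse_map S (bounded_coarse S) T (bounded_coarse T) f"
proof -
  have 2: "(\<lambda>(x, x'). (f x, f x')) ` M \<in> bounded_coarse T" if HM: "M \<in> bounded_coarse S" for M
  proof -
    obtain R where R: "M \<subseteq> S \<times> S" "\<forall>(x, y)\<in>M. dist x y < R" using HM by (simp add: bounded_coarse_def) blast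
    obtain R' where R': "\<forall>x\<in>S. \<forall>y\<in>S. dist x y < R \<longrightarrow> dist (f x) (f y) \<le> R'" using assms(2) by blast
    have "dist (f x) (f y) < R'+1" if "(x,y) \<in> M" for x y
    proof -
      have "x \<in> S" "y \<in> S" "dist x y < R" using R that by auto
      then have "dist (f x) (f y) \<le> R'" using R' by blast
      then show ?thesis by linarith
    qed
    moreover have "(\<lambda>(x, x'). (f x, f x')) ` M \<subseteq> T \<times> T" using R(1) assms(1) by auto
    ultimately show ?thesis
      unfolding bounded_coarse_def by (intro CollectI conjI exI[of _ "R'+1"]) auto
  qed
  show ?thesis unfolding coarse_map_def cbounded_bc using assms(1,3) 2 by auto
qed

lemma coarse_map_nI:
  fixes f :: "'a::real_normed_vector \<Rightarrow> 'b::real_normed_vector"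
  assumes "f ` S \<subseteq> T"
    and "\<And>R. \<exists>R'. \<forall>x\<in>S. \<forall>y\<in>S. dist x y < R \<longrightarrow> dist (f x) (f y) \<le> R'"
    and "\<And>r. \<exists>r'. \<forall>x\<in>S. norm (f x) \<le> r \<longrightarrow> norm x \<le> r'"
  shows "coarse_map S (bounded_coarse S) T (bounded_coarse T) f"
proof (rule coarse_map_bcI[OF assms(1,2)])
  fix B assume "B \<subseteq> T" "bounded B"
  then obtain r where r: "\<forall>x\<in>B. norm x \<le> r" unfolding bounded_iff by auto
  obtain r' where "\<forall>x\<in>S. norm (f x) \<le> r \<longrightarrow> norm x \<le> r'" using assms(3) by blast
  then show "bounded (f -` B \<inter> S)" unfolding bounded_iff using r by auto
qed

lemma gen_ray_bc: "gen_ray (bounded_coarse {0::real..})"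
  unfolding gen_ray_def
proof (intro conjI)
  show "coarse_structure {0..} (bounded_coarse {0::real..})"
    unfolding coarse_structure_def
  proof (intro conjI ballI allI impI)
    show "bounded_coarse {0::real..} \<subseteq> Pow ({0..} \<times> {0..})" unfolding bounded_coarse_def by auto
    show "{} \<in> bounded_coarse {0::real..}" unfolding bounded_coarse_def by auto
  next
    fix M N assume "M \<in> bounded_coarse {0::real..}" "N \<subseteq> M"
    then show "N \<in> bounded_coarse {0::real..}" unfolding bounded_coarse_def by blast
  next
    fix M N assume "M \<in> bounded_coarse {0::real..}" "N \<in> bounded_coarse {0::real..}"
    then obtain R1 R2 where "M \<subseteq> {0..} \<times> {0..}" "\<forall>(x, y)\<in>M. dist x y < R1"
      "N \<subseteq> {0..} \<times> {0..}" "\<forall>(x, y)\<in>N. dist x y < R2" unfolding bounded_coarse_def by auto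
    note A = this
    show "M \<union> N \<in> bounded_coarse {0::real..}"
      unfolding bounded_coarse_def
      apply (intro CollectI conjI exI[of _ "max R1 R2"])
      using A by fastforce+
    have "dist x z < R1 + R2" if "(x,y) \<in> M" "(y,z) \<in> N" for x y z
    proof -
      have "dist x y < R1" "dist y z < R2" using A that by fastforce+
      then show ?thesis using dist_triangle[of x z y] by linarith
    qed
    then show "M O N \<in> bounded_coarse {0::real..}"
      unfolding bounded_coarse_def
      apply (intro CollectI conjI exI[of _ "R1 + R2"])
      using A by fastforce+
  next
    fix M assume "M \<in> bounded_coarse {0::real..}"
    then obtain R where R: "M \<subseteq> {0..} \<times> {0..}" "\<forall>(x, y)\<in>M. dist x y < R" unfolding bounded_coarse_def by auto
    show "M\<inverse> \<in> bounded_coarse {0::real..}" unfolding bounded_coarse_def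
      apply (intro CollectI conjI exI[of _ R])
      using R by (fastforce simp: dist_commute)+
  qed
  show "\<exists>M\<in>bounded_coarse {0::real..}. Id_on {0..} \<subseteq> M"
    by (rule bexI[of _ "Id_on {0..}"]) (auto simp: bounded_coarse_def intro!: exI[of _ 1])
  show "\<forall>M\<in>bounded_coarse {0::real..}. \<exists>U\<in>bounded_coarse {0..}. M \<subseteq> U \<and> openin (top_of_set ({0..} \<times> {0..})) U"
  proof
    fix M assume "M \<in> bounded_coarse {0::real..}"
    then obtain R where R: "M \<subseteq> {0..} \<times> {0..}" "\<forall>(x, y)\<in>M. dist x y < R" unfolding bounded_coarse_def by auto
    define U where "U = ({0::real..} \<times> {0..}) \<inter> {p. dist (fst p) (snd p) < R}"
    have "open {p::real\<times>real. dist (fst p) (snd p) < R}"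
      by (intro open_Collect_less continuous_intros)
    then have "openin (top_of_set ({0..} \<times> {0..})) U" unfolding U_def by blast
    moreover have "U \<in> bounded_coarse {0..}" unfolding U_def bounded_coarse_def by auto
    moreover have "M \<subseteq> U" using R unfolding U_def by auto
    ultimately show "\<exists>U\<in>bounded_coarse {0..}. M \<subseteq> U \<and> openin (top_of_set ({0..} \<times> {0..})) U" by blast
  qed
  show "\<forall>B. cbounded (bounded_coarse {0::real..}) B \<longrightarrow> compact (closure B)"
    unfolding cbounded_bc by auto
qed

lemma htpy_limit_eq:
  assumes "\<forall>t\<ge>T. F (x, t) = l"
  shows "htpy_limit F x = l"
  unfolding htpy_limit_def
proof (rule the_equality)
  show "\<exists>T\<ge>0. \<forall>t\<ge>T. F (x, t) = l" using assms by (intro exI[of _ "max T 0"]) auto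
next
  fix l' assume "\<exists>T\<ge>0. \<forall>t\<ge>T. F (x, t) = l'"
  then obtain T' where "\<forall>t\<ge>T'. F (x, t) = l'" by auto
  then show "l' = l" using assms by (metis max.cobounded1 max.cobounded2)
qed

definition st :: "real \<Rightarrow> real \<Rightarrow> real" where
  "st s a = (if a > s then a - s else if a < -s then a + s else 0)"

lemma st_0: "st 0 a = a" unfolding st_def by auto
lemma st_big: "\<bar>a\<bar> \<le> s \<Longrightarrow> st s a = 0" unfolding st_def by auto
lemma st_lip: "0 \<le> s \<Longrightarrow> 0 \<le> s' \<Longrightarrow> \<bar>st s a - st s' a'\<bar> \<le> \<bar>a - a'\<bar> + \<bar>s - s'\<bar>"
  unfolding st_def by (auto split: if_splits)
lemma st_bound: "0 \<le> s \<Longrightarrow> \<bar>a\<bar> \<le> \<bar>st s a\<bar> + s" unfolding st_def by auto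

lemma coarse_map_comp:
  assumes "coarse_map X EA Y EB f" "coarse_map Y EB Z EC g"
  shows "coarse_map X EA Z EC (g \<circ> f)"
  unfolding coarse_map_def
proof (intro conjI allI ballI impI)
  have i: "f ` X \<subseteq> Y" "g ` Y \<subseteq> Z" using assms unfolding coarse_map_def by auto
  then show "(g \<circ> f) ` X \<subseteq> Z" by auto
  fix M assume "M \<in> EA"
  then have "(\<lambda>(x, x'). (f x, f x')) ` M \<in> EB" using assms(1) unfolding coarse_map_def by blast
  then have "(\<lambda>(x, x'). (g x, g x')) ` ((\<lambda>(x, x'). (f x, f x')) ` M) \<in> EC"
    using assms(2) unfolding coarse_map_def by blast
  moreover have "(\<lambda>(x, x'). ((g \<circ> f) x, (g \<circ> f) x')) ` M = (\<lambda>(x, x'). (g x, g x')) ` ((\<lambda>(x, x'). (f x, f x')) ` M)"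
    by (auto simp: image_iff)
  ultimately show "(\<lambda>(x, x'). ((g \<circ> f) x, (g \<circ> f) x')) ` M \<in> EC" by simp
next
  fix B assume "cbounded EC B"
  have i: "f ` X \<subseteq> Y" using assms unfolding coarse_map_def by auto
  have "cbounded EB (g -` B \<inter> Y)" using assms(2) \<open>cbounded EC B\<close> unfolding coarse_map_def by blast
  then have "cbounded EA (f -` (g -` B \<inter> Y) \<inter> X)" using assms(1) unfolding coarse_map_def by blast
  moreover have "(g \<circ> f) -` B \<inter> X = f -` (g -` B \<inter> Y) \<inter> X" using i by auto
  ultimately show "cbounded EA ((g \<circ> f) -` B \<inter> X)" by simp
qed

lemma coarse_map_id_bc:
  fixes S :: "'a::real_normed_vector set"
  shows "coarse_map S (bounded_coarse S) S (bounded_coarse S) id"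
proof (rule coarse_map_nI)
  fix R show "\<exists>R'. \<forall>x\<in>S. \<forall>y\<in>S. dist x y < R \<longrightarrow> dist (id x) (id y) \<le> R'"
    by (rule exI[of _ R]) auto
qed auto

lemma vec_norm_diff_bound:
  fixes x x' :: "real ^ 'n"
  assumes "0 \<le> s" "0 \<le> s'"
  shows "norm ((\<chi> i. st s (x$i)) - (\<chi> i. st s' (x'$i))) \<le> real CARD('n) * (norm (x - x') + \<bar>s - s'\<bar>)"
proof -
  have "norm ((\<chi> i. st s (x$i)) - (\<chi> i. st s' (x'$i))) \<le> (\<Sum>i\<in>UNIV. \<bar>st s (x$i) - st s' (x'$i)\<bar>)"
    using norm_le_l1_cart[of "(\<chi> i. st s (x$i)) - (\<chi> i. st s' (x'$i))"] by simp
  also have "\<dots> \<le> (\<Sum>i\<in>(UNIV::'n set). norm (x - x') + \<bar>s - s'\<bar>)"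
  proof (rule sum_mono)
    fix i
    have "\<bar>x$i - x'$i\<bar> \<le> norm (x - x')" using component_le_norm_cart[of "x - x'" i] by simp
    then show "\<bar>st s (x$i) - st s' (x'$i)\<bar> \<le> norm (x - x') + \<bar>s - s'\<bar>"
      using st_lip[OF assms, of "x$i" "x'$i"] by linarith
  qed
  also have "\<dots> = real CARD('n) * (norm (x - x') + \<bar>s - s'\<bar>)" by simp
  finally show ?thesis .
qed

lemma vec_norm_bound:
  fixes x :: "real ^ 'n"
  assumes "0 \<le> s" "norm (\<chi> i. st s (x$i)) \<le> r" "s \<le> r"
  shows "norm x \<le> real CARD('n) * (2 * r)"
proof -
  have "norm x \<le> (\<Sum>i\<in>UNIV. \<bar>x$i\<bar>)" by (rule norm_le_l1_cart)
  also have "\<dots> \<le> (\<Sum>i\<in>(UNIV::'n set). 2 * r)"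
  proof (rule sum_mono)
    fix i
    have "\<bar>st s (x$i)\<bar> \<le> r" using component_le_norm_cart[of "\<chi> i. st s (x$i)" i] assms(2) by simp
    then show "\<bar>x$i\<bar> \<le> 2 * r" using st_bound[OF assms(1), of "x$i"] assms(3) by linarith
  qed
  also have "\<dots> = real CARD('n) * (2 * r)" by simp
  finally show ?thesis .
qed

definition Fh :: "(((real ^ 'n) \<times> real) \<times> real) \<Rightarrow> (real ^ 'n) \<times> real" where
  "Fh = (\<lambda>((x, t), s). ((\<chi> i. st s (x$i)), t + min s (norm x)))"

lemma Fh_simp: "Fh ((x, t), s) = ((\<chi> i. st s (x$i)), t + min s (norm x))"
  unfolding Fh_def by simp

lemma Fh_0: "Fh (p, 0) = p"
  by (cases p) (simp add: Fh_simp st_0 vec_eq_iff)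

lemma Fh_late: "norm (fst p) \<le> s \<Longrightarrow> Fh (p, s) = (0, snd p + norm (fst p))"
proof (cases p)
  case (Pair x t)
  assume "norm (fst p) \<le> s"
  then have "\<bar>x$i\<bar> \<le> s" for i using component_le_norm_cart[of x i] Pair by simp
  then show ?thesis using Pair \<open>norm (fst p) \<le> s\<close> by (simp add: Fh_simp st_big vec_eq_iff)
qed

lemma Fh_limit: "htpy_limit Fh p = (0, snd p + norm (fst p))"
  by (rule htpy_limit_eq[of "norm (fst p)"]) (simp add: Fh_late)

lemma H_coarse:
  "coarse_map ((UNIV \<times> {0..}) \<times> {0..}) (bounded_coarse ((UNIV \<times> {0..}) \<times> {0..}))
     ((UNIV \<times> {0..}) \<times> {0..}) (bounded_coarse ((UNIV \<times> {0..}) \<times> {0..}))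
     (\<lambda>(p, s). (Fh (p, s) :: (real ^ 'n) \<times> real, s))"
proof (rule coarse_map_nI)
  show "(\<lambda>(p, s). (Fh (p, s) :: (real ^ 'n) \<times> real, s)) ` ((UNIV \<times> {0..}) \<times> {0..}) \<subseteq> (UNIV \<times> {0..}) \<times> {0..}"
    by (auto simp: Fh_simp)
next
  fix R :: real
  show "\<exists>R'. \<forall>p\<in>(UNIV \<times> {0..}) \<times> {0..}. \<forall>q\<in>(UNIV \<times> {0..}) \<times> {0..}. dist p q < R \<longrightarrow>
      dist ((\<lambda>(p, s). (Fh (p, s) :: (real ^ 'n) \<times> real, s)) p) ((\<lambda>(p, s). (Fh (p, s) :: (real ^ 'n) \<times> real, s)) q) \<le> R'"
  proof (intro exI[of _ "real CARD('n) * (R + R) + 4 * R"] ballI impI)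
    fix p q :: "((real ^ 'n) \<times> real) \<times> real"
    assume p: "p \<in> (UNIV \<times> {0..}) \<times> {0..}" and q: "q \<in> (UNIV \<times> {0..}) \<times> {0..}" and d: "dist p q < R"
    obtain x t s where pe: "p = ((x, t), s)" by (metis prod.collapse)
    obtain x' t' s' where qe: "q = ((x', t'), s')" by (metis prod.collapse)
    have s: "0 \<le> s" "0 \<le> s'" "0 \<le> t" "0 \<le> t'" using p q pe qe by auto
    have d1: "dist (x, t) (x', t') < R" "dist s s' < R"
      using d dist_fst_le[of p q] dist_snd_le[of p q] pe qe by auto
    have d2: "dist x x' < R" "dist t t' < R"
      using d1 dist_fst_le[of "(x,t)" "(x',t')"] dist_snd_le[of "(x,t)" "(x',t')"] by auto
    have n1: "norm (x - x') < R" "\<bar>t - t'\<bar> < R" "\<bar>s - s'\<bar> < R"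
      using d1 d2 by (auto simp: dist_norm dist_real_def)
    have V: "dist (\<chi> i. st s (x$i)) (\<chi> i. st s' (x'$i)) \<le> real CARD('n) * (R + R)"
    proof -
      have "dist (\<chi> i. st s (x$i)) (\<chi> i. st s' (x'$i)) \<le> real CARD('n) * (norm (x - x') + \<bar>s - s'\<bar>)"
        unfolding dist_norm using vec_norm_diff_bound[OF s(1,2)] by blast
      also have "\<dots> \<le> real CARD('n) * (R + R)"
        using n1 by (intro mult_left_mono) auto
      finally show ?thesis .
    qed
    have nn: "\<bar>norm x - norm x'\<bar> \<le> norm (x - x')" by (rule norm_triangle_ineq3)
    have mm: "\<bar>min s (norm x) - min s' (norm x')\<bar> \<le> \<bar>s - s'\<bar> + \<bar>norm x - norm x'\<bar>" by auto
    have T: "dist (t + min s (norm x)) (t' + min s' (norm x')) \<le> 3 * R"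
      unfolding dist_real_def using n1 nn mm by linarith
    have "dist (Fh ((x, t), s), s) (Fh ((x', t'), s'), s') \<le> dist (Fh ((x, t), s)) (Fh ((x', t'), s')) + dist s s'"
      by (rule dist_Pair_le)
    also have "\<dots> \<le> (dist (\<chi> i. st s (x$i)) (\<chi> i. st s' (x'$i)) + dist (t + min s (norm x)) (t' + min s' (norm x'))) + dist s s'"
      unfolding Fh_simp using dist_Pair_le by (intro add_right_mono) blast
    also have "\<dots> \<le> real CARD('n) * (R + R) + 4 * R" using V T d1 by linarith
    finally show "dist ((\<lambda>(p, s). (Fh (p, s) :: (real ^ 'n) \<times> real, s)) p) ((\<lambda>(p, s). (Fh (p, s) :: (real ^ 'n) \<times> real, s)) q) \<le> real CARD('n) * (R + R) + 4 * R"
      using pe qe by simp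
  qed
next
  fix r :: real
  show "\<exists>r'. \<forall>p\<in>(UNIV \<times> {0..}) \<times> {0..}. norm ((\<lambda>(p, s). (Fh (p, s) :: (real ^ 'n) \<times> real, s)) p) \<le> r \<longrightarrow> norm p \<le> r'"
  proof (intro exI[of _ "real CARD('n) * (2 * r) + 2 * r"] ballI impI)
    fix p :: "((real ^ 'n) \<times> real) \<times> real"
    assume p: "p \<in> (UNIV \<times> {0..}) \<times> {0..}" and b: "norm ((\<lambda>(p, s). (Fh (p, s) :: (real ^ 'n) \<times> real, s)) p) \<le> r"
    obtain x t s where pe: "p = ((x, t), s)" by (metis prod.collapse)
    have s: "0 \<le> s" "0 \<le> t" using p pe by auto
    have b1: "norm (Fh ((x, t), s)) \<le> r" "norm s \<le> r"
      using b pe norm_fst_le[of "Fh ((x, t), s)" s] norm_snd_le[of s "Fh ((x, t), s)"] by auto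
    have b2: "norm (\<chi> i. st s (x$i)) \<le> r" "norm (t + min s (norm x)) \<le> r"
      using b1(1) norm_fst_le[of "\<chi> i. st s (x$i)" "t + min s (norm x)"]
        norm_snd_le[of "t + min s (norm x)" "\<chi> i. st s (x$i)"] unfolding Fh_simp by auto
    have "0 \<le> min s (norm x)" using s by simp
    moreover have "t + min s (norm x) \<le> r" "s \<le> r" using b2(2) b1(2) by auto
    ultimately have sr: "s \<le> r" "t \<le> r" by linarith+
    have nx: "norm x \<le> real CARD('n) * (2 * r)" using vec_norm_bound[OF s(1) b2(1) sr(1)] .
    have "norm p \<le> norm (x, t) + norm s" unfolding pe by (rule norm_Pair_le)
    also have "\<dots> \<le> (norm x + norm t) + norm s" using norm_Pair_le[of x t] by simp
    also have "\<dots> \<le> real CARD('n) * (2 * r) + 2 * r" using nx sr s by simp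
    finally show "norm p \<le> real CARD('n) * (2 * r) + 2 * r" .
  qed
qed

theorem mainTheorem5:
  shows "coarse_htpy_equiv {0::real..} (bounded_coarse {0..})
           (UNIV \<times> {0::real..})
           (prod_coarse (bounded_coarse (UNIV :: (real ^ 'n) set)) (bounded_coarse {0::real..}))
           (\<lambda>s. (0, s))"
proof -
  define Y where "Y = (UNIV :: (real ^ 'n) set) \<times> {0::real..}"
  have EY: "prod_coarse (bounded_coarse (UNIV :: (real ^ 'n) set)) (bounded_coarse {0::real..}) = bounded_coarse Y"
    unfolding Y_def by (rule prod_coarse_eq)
  have EYR: "prod_coarse (bounded_coarse Y) (bounded_coarse {0::real..}) = bounded_coarse (Y \<times> {0..})"
    by (rule prod_coarse_eq)
  define f :: "real \<Rightarrow> (real ^ 'n) \<times> real" where "f = (\<lambda>s. (0, s))"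
  define g :: "(real ^ 'n) \<times> real \<Rightarrow> real" where "g = (\<lambda>p. norm (fst p) + snd p)"
  have cf: "coarse_map {0..} (bounded_coarse {0..}) Y (bounded_coarse Y) f"
  proof (rule coarse_map_nI)
    show "f ` {0..} \<subseteq> Y" unfolding f_def Y_def by auto
    fix R :: real
    show "\<exists>R'. \<forall>x\<in>{0..}. \<forall>y\<in>{0..}. dist x y < R \<longrightarrow> dist (f x) (f y) \<le> R'"
      by (intro exI[of _ R]) (auto simp: f_def dist_Pair_Pair)
  next
    fix r :: real
    show "\<exists>r'. \<forall>x\<in>{0..}. norm (f x) \<le> r \<longrightarrow> norm x \<le> r'"
      by (intro exI[of _ r]) (auto simp: f_def norm_Pair)
  qed
  have cg: "coarse_map Y (bounded_coarse Y) {0..} (bounded_coarse {0..}) g"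
  proof (rule coarse_map_nI)
    show "g ` Y \<subseteq> {0..}" unfolding g_def Y_def by auto
    fix R :: real
    show "\<exists>R'. \<forall>x\<in>Y. \<forall>y\<in>Y. dist x y < R \<longrightarrow> dist (g x) (g y) \<le> R'"
    proof (intro exI[of _ "2 * R"] ballI impI)
      fix p q assume "p \<in> Y" "q \<in> Y" "dist p q < R"
      then have a: "dist (fst p) (fst q) < R" "dist (snd p) (snd q) < R"
        using dist_fst_le[of p q] dist_snd_le[of p q] by auto
      have "\<bar>norm (fst p) - norm (fst q)\<bar> \<le> norm (fst p - fst q)" by (rule norm_triangle_ineq3)
      then show "dist (g p) (g q) \<le> 2 * R" using a unfolding g_def dist_real_def dist_norm
        by linarith
    qed
  next
    fix r :: real
    show "\<exists>r'. \<forall>x\<in>Y. norm (g x) \<le> r \<longrightarrow> norm x \<le> r'"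
    proof (intro exI[of _ "2 * r"] ballI impI)
      fix p assume "p \<in> Y" "norm (g p) \<le> r"
      then have "norm (fst p) + snd p \<le> r" "0 \<le> snd p" unfolding g_def Y_def by auto
      moreover have "norm p \<le> norm (fst p) + norm (snd p)" using norm_Pair_le[of "fst p" "snd p"] by simp
      moreover have "0 \<le> norm (fst p)" by simp
      moreover have "norm (snd p) = snd p" using \<open>0 \<le> snd p\<close> by simp
      ultimately show "norm p \<le> 2 * r" by linarith
    qed
  qed
  have gf: "g \<circ> f = id" unfolding g_def f_def by auto
  have cfg: "coarse_map Y (bounded_coarse Y) Y (bounded_coarse Y) (f \<circ> g)"
    by (rule coarse_map_comp[OF cg cf])
  have lim: "htpy_limit Fh = f \<circ> g"
    by (rule ext) (simp add: Fh_limit f_def g_def add.commute)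
  have ch: "coarse_homotopy Y (bounded_coarse Y) Y (bounded_coarse Y) (bounded_coarse {0..}) Fh"
    unfolding coarse_homotopy_def EYR
  proof (intro conjI allI impI)
    show "gen_ray (bounded_coarse {0..})" by (rule gen_ray_bc)
    show "coarse_map (Y \<times> {0..}) (bounded_coarse (Y \<times> {0..})) (Y \<times> {0..}) (bounded_coarse (Y \<times> {0..}))
        (\<lambda>(x, t). (Fh (x, t), t))"
      unfolding Y_def by (rule H_coarse)
    show "coarse_map Y (bounded_coarse Y) Y (bounded_coarse Y) (htpy_limit Fh)"
      unfolding lim by (rule cfg)
  next
    fix B assume "B \<subseteq> Y \<and> cbounded (bounded_coarse Y) B"
    then obtain r where r: "\<forall>p\<in>B. norm p \<le> r" unfolding cbounded_bc bounded_iff by auto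
    show "\<exists>T\<ge>0. \<forall>x\<in>B. \<forall>t\<ge>T. \<forall>t'\<ge>T. Fh (x, t) = Fh (x, t')"
    proof (intro exI[of _ "max r 0"] conjI ballI allI impI)
      fix p t t' assume "p \<in> B" "max r 0 \<le> t" "max r 0 \<le> t'"
      moreover have "norm (fst p) \<le> norm p" using norm_fst_le[of "fst p" "snd p"] by simp
      ultimately have "norm (fst p) \<le> t" "norm (fst p) \<le> t'" using r by fastforce+
      then show "Fh (p, t) = Fh (p, t')" by (simp add: Fh_late)
    qed simp
  qed
  have step: "htpy_step Y (bounded_coarse Y) Y (bounded_coarse Y) id (f \<circ> g)"
    unfolding htpy_step_def
    by (intro exI[of _ "bounded_coarse {0..}"] exI[of _ Fh] conjI ch) (auto simp: Fh_0 lim)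
  show ?thesis
    unfolding coarse_htpy_equiv_def coarsely_homotopic_def EY Y_def[symmetric] f_def[symmetric]
  proof (intro conjI exI[of _ g])
    show "coarse_map {0..} (bounded_coarse {0..}) Y (bounded_coarse Y) f" by (rule cf)
    show "coarse_map Y (bounded_coarse Y) {0..} (bounded_coarse {0..}) g" by (rule cg)
    show "coarse_map {0..} (bounded_coarse {0..}) {0..} (bounded_coarse {0..}) (g \<circ> f)"
      using coarse_map_id_bc[of "{0::real..}"] by (simp add: gf)
    show "coarse_map {0::real..} (bounded_coarse {0..}) {0..} (bounded_coarse {0..}) id"
      using coarse_map_id_bc[of "{0::real..}"] by simp
    show "coarse_map Y (bounded_coarse Y) Y (bounded_coarse Y) (f \<circ> g)" by (rule cfg)
    show "coarse_map Y (bounded_coarse Y) Y (bounded_coarse Y) id"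
      using coarse_map_id_bc[of Y] by simp
    show "(\<lambda>u v. htpy_step {0::real..} (bounded_coarse {0..}) {0..} (bounded_coarse {0..}) u v \<or>
            htpy_step {0..} (bounded_coarse {0..}) {0..} (bounded_coarse {0..}) v u)\<^sup>*\<^sup>* (g \<circ> f) id"
      unfolding gf by simp
    show "(\<lambda>u v. htpy_step Y (bounded_coarse Y) Y (bounded_coarse Y) u v \<or>
            htpy_step Y (bounded_coarse Y) Y (bounded_coarse Y) v u)\<^sup>*\<^sup>* (f \<circ> g) id"
      using step by (intro r_into_rtranclp) simp
  qed
qed

end
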